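(* Let $\mathcal{H}$ be a real Hilbert space, let $A\colon \mathcal{H}\rightrightarrows\mathcal{H}$ be maximally monotone, let $B\colon \mathcal{H}\to\mathcal{H}$ be monotone and $L_1$-Lipschitz, and let $C\colon \mathcal{H}\to\mathcal{H}$ be $1/L_2$-cocoercive. Let $x\in(A+B+C)^{-1}(0)$, let $\lambda \in \left(0,\frac{2}{4L_1+L_2} \right)$, and given $x_0,x_{-1}\in\mathcal{H}$ let $$x_{k+1} = J_{\lambda A}\bigl(x_k - 2\lambda B(x_k) + \lambda B(x_{k-1}) - \lambda C(x_k) \bigr) \quad\forall k\in\mathbb{N}.$$ Then there exists $\varepsilon>0$ such that, for all $k\in\mathbb{N}$, $$\|x_{k+1}-x\|^2 + 2\lambda\langle B(x_{k+1})-B(x_k),x-x_{k+1}\rangle + \left(\lambda L_1+\varepsilon \right)\|x_{k+1}-x_k\|^2 \leq \|x_k-x\|^2 + 2\lambda\langle B(x_k)-B(x_{k-1}),x-x_{k}\rangle + \lambda L_1\|x_k-x_{k-1}\|^2.$$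
   Context: $J_{\lambda A}:=(I+\lambda A)^{-1}$ is the resolvent. $C$ is $1/L_2$-cocoercive if $\langle x-y,C(x)-C(y)\rangle\geq\frac{1}{L_2}\|C(x)-C(y)\|^2$ for all $x,y$. *)

theory Defs
  imports "HOL-Analysis.Analysis"
begin

definition monotone_op :: "('a::real_inner \<Rightarrow> 'a set) \<Rightarrow> bool" where
  "monotone_op A \<longleftrightarrow>
     (\<forall>x y u v. u \<in> A x \<longrightarrow> v \<in> A y \<longrightarrow> inner (x - y) (u - v) \<ge> 0)"

definition maximal_monotone :: "('a::real_inner \<Rightarrow> 'a set) \<Rightarrow> bool" where
  "maximal_monotone A \<longleftrightarrow> monotone_op A \<and>
     (\<forall>A'. monotone_op A' \<and> (\<forall>x. A x \<subseteq> A' x) \<longrightarrow> A' = A)"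

definition monotone_fun :: "('a::real_inner \<Rightarrow> 'a) \<Rightarrow> bool" where
  "monotone_fun B \<longleftrightarrow> (\<forall>x y. inner (x - y) (B x - B y) \<ge> 0)"

definition cocoercive :: "real \<Rightarrow> ('a::real_inner \<Rightarrow> 'a) \<Rightarrow> bool" where
  "cocoercive c C \<longleftrightarrow> (\<forall>x y. inner (x - y) (C x - C y) \<ge> c * (norm (C x - C y))\<^sup>2)"

text \<open>Resolvent J_{lam A} = (I + lam A)^{-1}, as a set-valued map:
  p \<in> J y iff y \<in> p + lam A(p).\<close>
definition resolvent :: "real \<Rightarrow> ('a::real_vector \<Rightarrow> 'a set) \<Rightarrow> 'a \<Rightarrow> 'a set" where
  "resolvent lam A y = {p. \<exists>a \<in> A p. y = p + lam *\<^sub>R a}"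

end

theory Submission
  imports Defs
begin

lemma step:
  fixes p q r x a1 a0 :: "'a::real_inner"
  assumes Amono: "inner (p - x) (a1 - a0) \<ge> 0"
    and Bmono: "inner (p - x) (B p - B x) \<ge> 0"
    and Blip: "norm (B q - B r) \<le> L1 * norm (q - r)"
    and L1: "L1 \<ge> 0" and L2: "L2 > 0"
    and Cco: "inner (q - x) (C q - C x) \<ge> (1/L2) * (norm (C q - C x))\<^sup>2"
    and a0: "a0 + B x + C x = 0"
    and a1: "q - (2 * lam) *\<^sub>R B q + lam *\<^sub>R B r - lam *\<^sub>R C q = p + lam *\<^sub>R a1"
    and lam: "lam > 0"
  shows "(norm (p - x))\<^sup>2 + 2 * lam * inner (B p - B q) (x - p)
      + (1 - lam * L1 - lam * L2 / 2) * (norm (p - q))\<^sup>2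
    \<le> (norm (q - x))\<^sup>2 + 2 * lam * inner (B q - B r) (x - q) + lam * L1 * (norm (q - r))\<^sup>2"
proof -
  have v: "lam *\<^sub>R (a1 - a0) = (q - p) + lam *\<^sub>R (B x - B p) + lam *\<^sub>R (B p - B q)
      - lam *\<^sub>R (B q - B r) + lam *\<^sub>R (C x - C q)"
  proof -
    have "a0 = - B x - C x" using a0 by (simp add: algebra_simps eq_neg_iff_add_eq_0)
    moreover have "lam *\<^sub>R a1 = q - (2 * lam) *\<^sub>R B q + lam *\<^sub>R B r - lam *\<^sub>R C q - p"
      using a1 by (simp add: algebra_simps)
    ultimately have "lam *\<^sub>R (a1 - a0) = (q - (2 * lam) *\<^sub>R B q + lam *\<^sub>R B r - lam *\<^sub>R C q - p) + lam *\<^sub>R (B x + C x)"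
      by (simp add: scaleR_diff_right scaleR_add_right add.commute)
    moreover have "(2 * lam) *\<^sub>R B q = lam *\<^sub>R B q + lam *\<^sub>R B q"
      by (metis mult_2 scaleR_left_distrib)
    ultimately show ?thesis by (simp add: algebra_simps del: scaleR_left_distrib)
  qed
  have I: "lam * inner (p - x) (a1 - a0) = inner (p - x) (q - p) + lam * inner (p - x) (B x - B p)
     + lam * inner (p - x) (B p - B q) - lam * inner (p - x) (B q - B r) + lam * inner (p - x) (C x - C q)"
    using arg_cong[OF v, of "inner (p - x)"] by (simp add: inner_add_right inner_diff_right)
  have f1: "2 * inner (p - x) (q - p) = (norm (q - x))\<^sup>2 - (norm (p - x))\<^sup>2 - (norm (p - q))\<^sup>2"
  proof -
    have "q - x = (q - p) + (p - x)" by simp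
    hence "(norm (q - x))\<^sup>2 = (norm (q - p))\<^sup>2 + 2 * inner (p - x) (q - p) + (norm (p - x))\<^sup>2"
      by (metis inner_commute power2_norm_eq_inner inner_add_left inner_add_right
           add.assoc mult_2)
    moreover have "norm (q - p) = norm (p - q)" by (rule norm_minus_commute)
    ultimately show ?thesis by simp
  qed
  have f2: "inner (p - x) (B x - B p) \<le> 0"
    using Bmono by (metis inner_minus_right minus_diff_eq neg_0_le_iff_le)
  have f3: "inner (p - x) (B p - B q) = - inner (B p - B q) (x - p)"
    by (metis inner_commute inner_minus_right minus_diff_eq)
  have f4: "- inner (p - x) (B q - B r) = inner (B q - B r) (x - q) + inner (B q - B r) (q - p)"
    by (simp add: inner_diff_left inner_diff_right inner_commute)
  have f5: "inner (B q - B r) (q - p) \<le> L1 * norm (q - r) * norm (p - q)"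
  proof -
    have "inner (B q - B r) (q - p) \<le> norm (B q - B r) * norm (q - p)" by (rule norm_cauchy_schwarz)
    also have "\<dots> \<le> L1 * norm (q - r) * norm (q - p)" using Blip by (simp add: mult_right_mono)
    finally show ?thesis by (simp add: norm_minus_commute)
  qed
  have f6: "2 * (norm (q - r) * norm (p - q)) \<le> (norm (q - r))\<^sup>2 + (norm (p - q))\<^sup>2"
    using sum_squares_bound[of "norm (q - r)" "norm (p - q)"] by simp
  have f7: "inner (p - x) (C x - C q) = - inner (q - x) (C q - C x) + inner (p - q) (C x - C q)"
    by (simp add: inner_diff_left inner_diff_right inner_commute)
  have f8: "inner (p - q) (C x - C q) \<le> norm (p - q) * norm (C q - C x)"
    using norm_cauchy_schwarz[of "p - q" "C x - C q"] by (simp add: norm_minus_commute)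
  have f9: "norm (p - q) * norm (C q - C x) \<le> L2 / 4 * (norm (p - q))\<^sup>2 + (1/L2) * (norm (C q - C x))\<^sup>2"
  proof -
    define a where "a = norm (p - q)"
    define b where "b = norm (C q - C x)"
    have "0 \<le> (L2 * a - 2 * b)\<^sup>2" by simp
    hence "4 * L2 * (a * b) \<le> L2 * L2 * a\<^sup>2 + 4 * b\<^sup>2" by (simp add: power2_eq_square algebra_simps)
    hence "a * b \<le> (L2 * L2 * a\<^sup>2 + 4 * b\<^sup>2) / (4 * L2)" using L2 by (simp add: field_simps)
    also have "\<dots> = L2 / 4 * a\<^sup>2 + (1/L2) * b\<^sup>2" using L2 by (simp add: field_simps power2_eq_square)
    finally show ?thesis unfolding a_def b_def .
  qed
  have g: "inner (p - x) (q - p) + lam * inner (p - x) (B x - B p)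
     + lam * inner (p - x) (B p - B q) - lam * inner (p - x) (B q - B r) + lam * inner (p - x) (C x - C q) \<ge> 0"
    using I Amono lam by (metis mult_nonneg_nonneg less_imp_le)
  have h2: "lam * inner (p - x) (B x - B p) \<le> 0" using f2 lam by (simp add: mult_nonneg_nonpos)
  have h3: "lam * inner (p - x) (B p - B q) = - (lam * inner (B p - B q) (x - p))"
    using f3 by simp
  have h4: "- (lam * inner (p - x) (B q - B r)) = lam * inner (B q - B r) (x - q) + lam * inner (B q - B r) (q - p)"
    using arg_cong[OF f4, of "\<lambda>t. lam * t"] by (simp add: algebra_simps)
  have h5: "lam * inner (B q - B r) (q - p) \<le> lam * L1 * (norm (q - r) * norm (p - q))"
    using f5 lam by (metis mult.assoc mult_le_cancel_left_pos)
  have h6: "2 * (lam * L1 * (norm (q - r) * norm (p - q))) \<le> lam * L1 * (norm (q - r))\<^sup>2 + lam * L1 * (norm (p - q))\<^sup>2"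
  proof -
    have "lam * L1 * (2 * (norm (q - r) * norm (p - q))) \<le> lam * L1 * ((norm (q - r))\<^sup>2 + (norm (p - q))\<^sup>2)"
      using f6 lam L1 by (intro mult_left_mono) auto
    thus ?thesis by (simp add: algebra_simps)
  qed
  have h7': "lam * inner (p - x) (C x - C q) = - (lam * inner (q - x) (C q - C x)) + lam * inner (p - q) (C x - C q)"
    using f7 by (simp add: algebra_simps)
  have h7: "lam * inner (q - x) (C q - C x) \<ge> lam / L2 * (norm (C q - C x))\<^sup>2"
  proof -
    have "lam * inner (q - x) (C q - C x) \<ge> lam * ((1/L2) * (norm (C q - C x))\<^sup>2)"
      using Cco lam by (intro mult_left_mono) auto
    thus ?thesis by simp
  qed
  have h8: "lam * inner (p - q) (C x - C q) \<le> lam * L2 / 4 * (norm (p - q))\<^sup>2 + lam / L2 * (norm (C q - C x))\<^sup>2"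
  proof -
    have "lam * inner (p - q) (C x - C q) \<le> lam * (L2 / 4 * (norm (p - q))\<^sup>2 + (1/L2) * (norm (C q - C x))\<^sup>2)"
      using f8 f9 lam by (meson order_trans mult_left_mono less_imp_le)
    thus ?thesis by (simp add: algebra_simps)
  qed
  have goal: "(1 - lam * L1 - lam * L2 / 2) * (norm (p - q))\<^sup>2 = (norm (p - q))\<^sup>2 - lam * L1 * (norm (p - q))\<^sup>2 - 2 * (lam * L2 / 4 * (norm (p - q))\<^sup>2)"
    by (simp add: algebra_simps)
  show ?thesis unfolding goal using g f1 h2 h3 h4 h5 h6 h7' h7 h8
    by linarith
qed

theorem lemma5p1:
  fixes A :: "'a::{real_inner, complete_space} \<Rightarrow> 'a set"
    and B C :: "'a \<Rightarrow> 'a"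
    and L1 L2 lam :: real
    and xs :: "int \<Rightarrow> 'a"
    and x :: 'a
  assumes A_mm: "maximal_monotone A"
    and B_mono: "monotone_fun B"
    and B_lip: "L1-lipschitz_on UNIV B"
    and L2_pos: "L2 > 0"
    and C_coco: "cocoercive (1 / L2) C"
    and x_zero: "\<exists>a \<in> A x. a + B x + C x = 0"
    and lam_pos: "0 < lam"
    and lam_bd: "lam < 2 / (4 * L1 + L2)"
    and iter: "\<And>k. k \<ge> 0 \<Longrightarrow>
      xs (k + 1) \<in> resolvent lam A
        (xs k - (2 * lam) *\<^sub>R B (xs k) + lam *\<^sub>R B (xs (k - 1)) - lam *\<^sub>R C (xs k))"
  shows "\<exists>\<epsilon>>0. \<forall>k\<ge>0.
    (norm (xs (k + 1) - x))\<^sup>2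
      + 2 * lam * inner (B (xs (k + 1)) - B (xs k)) (x - xs (k + 1))
      + (lam * L1 + \<epsilon>) * (norm (xs (k + 1) - xs k))\<^sup>2
    \<le> (norm (xs k - x))\<^sup>2
      + 2 * lam * inner (B (xs k) - B (xs (k - 1))) (x - xs k)
      + lam * L1 * (norm (xs k - xs (k - 1)))\<^sup>2"
proof -
  have L1: "L1 \<ge> 0" using B_lip by (simp add: lipschitz_on_def)
  have pos: "4 * L1 + L2 > 0" using L1 L2_pos by simp
  have "lam * (4 * L1 + L2) < 2" using lam_bd pos by (simp add: field_simps)
  define e where "e = 1 - 2 * lam * L1 - lam * L2 / 2"
  have e: "e > 0" unfolding e_def using \<open>lam * (4 * L1 + L2) < 2\<close> by (simp add: algebra_simps)
  obtain a0 where a0A: "a0 \<in> A x" and a0: "a0 + B x + C x = 0" using x_zero by blast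
  have Amono: "monotone_op A" using A_mm by (simp add: maximal_monotone_def)
  show ?thesis
  proof (intro exI[of _ e] conjI allI impI e)
    fix k :: int assume k: "k \<ge> 0"
    obtain a1 where a1A: "a1 \<in> A (xs (k + 1))" and a1:
      "xs k - (2 * lam) *\<^sub>R B (xs k) + lam *\<^sub>R B (xs (k - 1)) - lam *\<^sub>R C (xs k) = xs (k + 1) + lam *\<^sub>R a1"
      using iter[OF k] by (auto simp: resolvent_def)
    have ee: "lam * L1 + e = 1 - lam * L1 - lam * L2 / 2" unfolding e_def by simp
    show "(norm (xs (k + 1) - x))\<^sup>2
      + 2 * lam * inner (B (xs (k + 1)) - B (xs k)) (x - xs (k + 1))
      + (lam * L1 + e) * (norm (xs (k + 1) - xs k))\<^sup>2
    \<le> (norm (xs k - x))\<^sup>2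
      + 2 * lam * inner (B (xs k) - B (xs (k - 1))) (x - xs k)
      + lam * L1 * (norm (xs k - xs (k - 1)))\<^sup>2"
      unfolding ee
    proof (rule step[OF _ _ _ L1 L2_pos _ a0 a1 lam_pos])
      show "inner (xs (k + 1) - x) (a1 - a0) \<ge> 0"
        using Amono a1A a0A unfolding monotone_op_def by blast
      show "inner (xs (k + 1) - x) (B (xs (k + 1)) - B x) \<ge> 0"
        using B_mono unfolding monotone_fun_def by blast
      show "norm (B (xs k) - B (xs (k - 1))) \<le> L1 * norm (xs k - xs (k - 1))"
        using B_lip unfolding lipschitz_on_def dist_norm by blast
      show "inner (xs k - x) (C (xs k) - C x) \<ge> (1/L2) * (norm (C (xs k) - C x))\<^sup>2"
        using C_coco unfolding cocoercive_def by blast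
    qed
  qed
qed

end
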